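(* Let $b(r)$ be a smooth positive function on an open interval of $r>0$ and consider the metric $ds^2=-b^2dt^2+b^{-2}dr^2+r^2(d\theta^2+\sin^2\theta\,d\phi^2)$. Let $\kappa_1,\kappa_2$ be constants, set $\Lambda=-\kappa_1$, $\lambda=-\kappa_2$, and let $$K_{kl}=\kappa_2r^2\,u_ku_l+(\kappa_1+2\kappa_2r^2)g_{kl}-\kappa_2r^2\,\chi_k\chi_l .$$ Then the vacuum conformal Killing gravity equations $R_{kl}-\tfrac12Rg_{kl}=K_{kl}$ hold if and only if there is a constant $M$ such that $$b^2(r)=1-\frac{2M}{r}-\frac{\Lambda}{3}r^2-\frac{\lambda}{5}r^4 .$$
   Context: $u_k$ is the unit timelike covector with components $u_0=-b$ and all others zero; $\chi_k$ is the unit radial covector with $\chi_r=1/b$ and all others zero. $R_{kl}$ is the Ricci tensor and $R$ the scalar curvature. The tensor $K_{kl}$ is the divergence-free conformal Killing tensor $\mathsf A u_ku_l+\mathsf Bg_{kl}+\mathsf C\chi_k\chi_l$ with $\mathsf A=\kappa_2 f_2^2-2\kappa_3 b^2$, $\mathsf B=\kappa_1+2\kappa_2 f_2^2+\kappa_3 b^2$, $\mathsf C=-\kappa_2 f_2^2$, specialized to $f_2=r$ and $\kappa_3=0$ (the case $h=bf_1=1$). *)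

theory Defs
  imports "HOL-Analysis.Analysis"
begin

text \<open>Coordinates: points of spacetime are functions x :: nat => real, of which only
  x 0 = t, x 1 = r, x 2 = theta, x 3 = phi matter. Indices range over 0..3.\<close>

type_synonym point = "nat \<Rightarrow> real"
type_synonym metric = "point \<Rightarrow> nat \<Rightarrow> nat \<Rightarrow> real"

definition smooth_on :: "real set \<Rightarrow> (real \<Rightarrow> real) \<Rightarrow> bool" where
  "smooth_on I f \<longleftrightarrow> (\<forall>n. \<forall>r\<in>I. ((deriv ^^ n) f) differentiable (at r))"

definition pd :: "(point \<Rightarrow> real) \<Rightarrow> nat \<Rightarrow> point \<Rightarrow> real" where
  "pd f i x = deriv (\<lambda>s. f (x(i := s))) (x i)"

definition ginv :: "metric \<Rightarrow> point \<Rightarrow> nat \<Rightarrow> nat \<Rightarrow> real" where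
  "ginv g x = (THE h. (\<forall>j k. (j \<ge> 4 \<or> k \<ge> 4) \<longrightarrow> h j k = 0) \<and>
      (\<forall>i<4. \<forall>k<4. (\<Sum>j<4. g x i j * h j k) = (if i = k then 1 else 0)))"

definition christoffel :: "metric \<Rightarrow> point \<Rightarrow> nat \<Rightarrow> nat \<Rightarrow> nat \<Rightarrow> real" where
  "christoffel g x k i j = (1/2) * (\<Sum>l<4. ginv g x k l *
      (pd (\<lambda>y. g y j l) i x + pd (\<lambda>y. g y i l) j x - pd (\<lambda>y. g y i j) l x))"

definition ricci :: "metric \<Rightarrow> point \<Rightarrow> nat \<Rightarrow> nat \<Rightarrow> real" where
  "ricci g x i j = (\<Sum>k<4. pd (\<lambda>y. christoffel g y k i j) k x
      - pd (\<lambda>y. christoffel g y k i k) j x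
      + (\<Sum>l<4. christoffel g x k k l * christoffel g x l i j
               - christoffel g x k j l * christoffel g x l i k))"

definition scalar_curv :: "metric \<Rightarrow> point \<Rightarrow> real" where
  "scalar_curv g x = (\<Sum>i<4. \<Sum>j<4. ginv g x i j * ricci g x i j)"

definition sss_metric :: "(real \<Rightarrow> real) \<Rightarrow> metric" where
  "sss_metric b x i j = (if i = j then
      (if i = 0 then - (b (x 1))\<^sup>2
       else if i = 1 then 1 / (b (x 1))\<^sup>2
       else if i = 2 then (x 1)\<^sup>2
       else if i = 3 then (x 1)\<^sup>2 * (sin (x 2))\<^sup>2
       else 0)
    else 0)"

definition u_cov :: "(real \<Rightarrow> real) \<Rightarrow> point \<Rightarrow> nat \<Rightarrow> real" where
  "u_cov b x k = (if k = 0 then - b (x 1) else 0)"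

definition chi_cov :: "(real \<Rightarrow> real) \<Rightarrow> point \<Rightarrow> nat \<Rightarrow> real" where
  "chi_cov b x k = (if k = 1 then 1 / b (x 1) else 0)"

definition K_tensor :: "real \<Rightarrow> real \<Rightarrow> (real \<Rightarrow> real) \<Rightarrow> point \<Rightarrow> nat \<Rightarrow> nat \<Rightarrow> real" where
  "K_tensor \<kappa>1 \<kappa>2 b x k l =
     \<kappa>2 * (x 1)\<^sup>2 * u_cov b x k * u_cov b x l
     + (\<kappa>1 + 2 * \<kappa>2 * (x 1)\<^sup>2) * sss_metric b x k l
     - \<kappa>2 * (x 1)\<^sup>2 * chi_cov b x k * chi_cov b x l"

end

theory Submission
  imports Defs
begin

definition gd :: "(real\<Rightarrow>real) \<Rightarrow> real \<Rightarrow> real \<Rightarrow> nat \<Rightarrow> nat \<Rightarrow> real" where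
 "gd b r t i j = (if i=j then (if i=0 then - ((b r)^2) else if i=1 then 1/(b r)^2 else if i=2 then r^2
    else if i=3 then r^2 * (sin t)^2 else 0) else 0)"

definition hinv :: "(real\<Rightarrow>real) \<Rightarrow> real \<Rightarrow> real \<Rightarrow> nat \<Rightarrow> nat \<Rightarrow> real" where
 "hinv b r t i j = (if i=j then (if i=0 then -1/(b r)^2 else if i=1 then (b r)^2 else if i=2 then 1/r^2
    else if i=3 then 1/(r^2 * (sin t)^2) else 0) else 0)"

lemma sss_gd: "sss_metric b x i j = gd b (x 1) (x 2) i j"
  unfolding sss_metric_def gd_def by simp

lemma less4: "(i::nat) < 4 \<longleftrightarrow> i = 0 \<or> i = 1 \<or> i = 2 \<or> i = 3" by auto

lemma sum4: "(\<Sum>j<(4::nat). f j) = f 0 + f 1 + f 2 + (f 3 :: real)"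
  by (simp add: eval_nat_numeral)

lemma ginv_eq:
  assumes "b (x 1) \<noteq> 0" "x 1 \<noteq> 0" "sin (x 2) \<noteq> 0"
  shows "ginv (sss_metric b) x = hinv b (x 1) (x 2)"
  unfolding ginv_def
proof (rule the_equality)
  show "(\<forall>j k. 4 \<le> j \<or> 4 \<le> k \<longrightarrow> hinv b (x 1) (x 2) j k = 0) \<and>
    (\<forall>i<4. \<forall>k<4. (\<Sum>j<4. sss_metric b x i j * hinv b (x 1) (x 2) j k) = (if i = k then 1 else 0))"
    using assms by (auto simp: sum4 less4 sss_gd gd_def hinv_def field_simps)
next
  fix h assume h: "(\<forall>j k. 4 \<le> j \<or> 4 \<le> k \<longrightarrow> h j k = (0::real)) \<and>
    (\<forall>i<4. \<forall>k<4. (\<Sum>j<4. sss_metric b x i j * h j k) = (if i = k then 1 else 0))"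
  show "h = hinv b (x 1) (x 2)"
  proof (intro ext)
    fix j k
    show "h j k = hinv b (x 1) (x 2) j k"
    proof (cases "j < 4 \<and> k < 4")
      case True
      then have "(\<Sum>j'<4. sss_metric b x j j' * h j' k) = (if j = k then 1 else 0)" using h by blast
      then show ?thesis using True assms unfolding less4
        by (auto simp: sum4 sss_gd gd_def hinv_def field_simps)
    next
      case False then show ?thesis using h by (auto simp: hinv_def)
    qed
  qed
qed


definition dg :: "(real\<Rightarrow>real) \<Rightarrow> real \<Rightarrow> real \<Rightarrow> nat \<Rightarrow> nat \<Rightarrow> nat \<Rightarrow> real" where
 "dg b r t m i j = (if i = j then (if m = 1 then (if i=0 then -2*b r*deriv b r
    else if i=1 then -2*deriv b r/(b r)^3 else if i=2 then 2*r else if i=3 then 2*r*(sin t)^2 else 0)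
   else if m=2 then (if i=3 then 2 * r^2 * sin t * cos t else 0) else 0) else 0)"

locale sss =
  fixes b :: "real \<Rightarrow> real" and I :: "real set"
  assumes openI: "open I" and Ipos: "I \<subseteq> {0<..}" and bpos: "\<forall>r\<in>I. b r > 0"
    and db: "\<forall>r\<in>I. (b has_real_derivative deriv b r) (at r)"
    and ddb: "\<forall>r\<in>I. (deriv b has_real_derivative deriv (deriv b) r) (at r)"
begin

definition good :: "point \<Rightarrow> bool" where "good x \<longleftrightarrow> x 1 \<in> I \<and> 0 < x 2 \<and> x 2 < pi"

lemma gd_dr: assumes "r \<in> I"
  shows "((\<lambda>s. gd b s t j l) has_real_derivative dg b r t 1 j l) (at r)"
proof -
  have b: "b r > 0" using assms bpos by auto
  have d: "(b has_real_derivative deriv b r) (at r)" using assms db by auto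
  show ?thesis
    using b d unfolding gd_def dg_def
    by (auto intro!: derivative_eq_intros simp: field_simps power2_eq_square power3_eq_cube)
qed

lemma gd_dt: "((\<lambda>s. gd b r s j l) has_real_derivative dg b r t 2 j l) (at t)"
  unfolding gd_def dg_def
  by (cases "j = l"; cases "l=0"; cases "l=1"; cases "l=2"; cases "l=3")
    (auto intro!: derivative_eq_intros simp: field_simps power2_eq_square)

lemma pd_g: assumes "good y" "i < 4"
  shows "pd (\<lambda>y. sss_metric b y j l) i y = dg b (y 1) (y 2) i j l"
proof -
  have "i = 0 \<or> i = 1 \<or> i = 2 \<or> i = 3" using assms(2) by auto
  then show ?thesis
  proof (elim disjE)
    assume "i = 1" then show ?thesis using gd_dr[of "y 1" "y 2" j l] assms
      unfolding pd_def by (simp add: sss_gd good_def DERIV_imp_deriv)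
  next
    assume "i = 2" then show ?thesis using gd_dt[of "y 1" j l "y 2"] assms
      unfolding pd_def by (simp add: sss_gd good_def DERIV_imp_deriv)
  qed (auto simp: pd_def sss_gd dg_def)
qed

end


definition Gam :: "(real\<Rightarrow>real) \<Rightarrow> real \<Rightarrow> real \<Rightarrow> nat \<Rightarrow> nat \<Rightarrow> nat \<Rightarrow> real" where
 "Gam b r t k i j =
  (if k=0 \<and> ((i=0\<and>j=1) \<or> (i=1\<and>j=0)) then deriv b r / b r
   else if k=1 \<and> i=0 \<and> j=0 then (b r)^3 * deriv b r
   else if k=1 \<and> i=1 \<and> j=1 then - (deriv b r / b r)
   else if k=1 \<and> i=2 \<and> j=2 then - (r * (b r)^2)
   else if k=1 \<and> i=3 \<and> j=3 then - (r * (b r)^2 * (sin t)^2)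
   else if k=2 \<and> ((i=1\<and>j=2) \<or> (i=2\<and>j=1)) then 1/r
   else if k=2 \<and> i=3 \<and> j=3 then - (sin t * cos t)
   else if k=3 \<and> ((i=1\<and>j=3) \<or> (i=3\<and>j=1)) then 1/r
   else if k=3 \<and> ((i=2\<and>j=3) \<or> (i=3\<and>j=2)) then cos t / sin t
   else 0)"

context sss begin

lemma good_facts: assumes "good y" shows "b (y 1) > 0" "y 1 > 0" "sin (y 2) > 0"
  using assms bpos Ipos unfolding good_def by (auto intro: sin_gt_zero)

lemma chr: assumes "good y" "k < 4" "i < 4" "j < 4"
  shows "christoffel (sss_metric b) y k i j = Gam b (y 1) (y 2) k i j"
proof -
  note f = good_facts[OF assms(1)]
  have g: "ginv (sss_metric b) y = hinv b (y 1) (y 2)"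
    by (rule ginv_eq) (use f in auto)
  show ?thesis
    using assms(2-4) f unfolding christoffel_def g less4
    by (auto simp: sum4 pd_g[OF assms(1)] hinv_def dg_def Gam_def field_simps power2_eq_square power3_eq_cube)
qed

end


definition dGr :: "(real\<Rightarrow>real) \<Rightarrow> real \<Rightarrow> real \<Rightarrow> nat \<Rightarrow> nat \<Rightarrow> nat \<Rightarrow> real" where
 "dGr b r t k i j =
  (if k=0 \<and> ((i=0\<and>j=1) \<or> (i=1\<and>j=0)) then (deriv (deriv b) r * b r - (deriv b r)^2) / (b r)^2
   else if k=1 \<and> i=0 \<and> j=0 then 3 * (b r)^2 * (deriv b r)^2 + (b r)^3 * deriv (deriv b) r
   else if k=1 \<and> i=1 \<and> j=1 then - ((deriv (deriv b) r * b r - (deriv b r)^2) / (b r)^2)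
   else if k=1 \<and> i=2 \<and> j=2 then - ((b r)^2 + 2 * r * b r * deriv b r)
   else if k=1 \<and> i=3 \<and> j=3 then - (((b r)^2 + 2 * r * b r * deriv b r) * (sin t)^2)
   else if k=2 \<and> ((i=1\<and>j=2) \<or> (i=2\<and>j=1)) then - 1/r^2
   else if k=3 \<and> ((i=1\<and>j=3) \<or> (i=3\<and>j=1)) then - 1/r^2
   else 0)"

definition dGt :: "(real\<Rightarrow>real) \<Rightarrow> real \<Rightarrow> real \<Rightarrow> nat \<Rightarrow> nat \<Rightarrow> nat \<Rightarrow> real" where
 "dGt b r t k i j =
  (if k=1 \<and> i=3 \<and> j=3 then - (2 * r * (b r)^2 * sin t * cos t)
   else if k=2 \<and> i=3 \<and> j=3 then (sin t)^2 - (cos t)^2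
   else if k=3 \<and> ((i=2\<and>j=3) \<or> (i=3\<and>j=2)) then - 1 / (sin t)^2
   else 0)"

definition dG where "dG b r t m k i j = (if m = 1 then dGr b r t k i j else if m = 2 then dGt b r t k i j else 0)"

context sss begin

lemma Gam_dr: assumes "r \<in> I" "k < 4" "i < 4" "j < 4"
  shows "((\<lambda>s. Gam b s t k i j) has_real_derivative dGr b r t k i j) (at r)"
proof -
  have b: "b r > 0" "r > 0" using assms bpos Ipos by auto
  have d: "(b has_real_derivative deriv b r) (at r)" "(deriv b has_real_derivative deriv (deriv b) r) (at r)"
    using assms db ddb by auto
  show ?thesis
    using assms(2-4) unfolding less4
    by (elim disjE) (use b d in \<open>simp_all add: Gam_def dGr_def, (auto intro!: derivative_eq_intros simp: field_simps power2_eq_square power3_eq_cube)?\<close>)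
qed

lemma Gam_dt: assumes "sin t \<noteq> 0" "k < 4" "i < 4" "j < 4"
  shows "((\<lambda>s. Gam b r s k i j) has_real_derivative dGt b r t k i j) (at t)"
  using assms(2-4) unfolding less4
  apply (elim disjE)
  apply (simp_all add: Gam_def dGt_def)
  using assms(1)
  apply (auto intro!: derivative_eq_intros simp: field_simps power2_eq_square)
  apply (metis sin_cos_squared_add3 distrib_right mult.assoc mult_1_left)+
  done

lemma pd_chr: assumes "good x" "m < 4" "k < 4" "i < 4" "j < 4"
  shows "pd (\<lambda>y. christoffel (sss_metric b) y k i j) m x = dG b (x 1) (x 2) m k i j"
proof -
  have "m = 0 \<or> m = 1 \<or> m = 2 \<or> m = 3" using assms(2) by auto
  then show ?thesis
  proof (elim disjE)
    assume m: "m = 1"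
    have ev: "eventually (\<lambda>s. christoffel (sss_metric b) (x(1:=s)) k i j = Gam b s (x 2) k i j) (nhds (x 1))"
    proof -
      have "eventually (\<lambda>s. s \<in> I) (nhds (x 1))"
        using assms(1) openI unfolding good_def by (auto intro: eventually_nhds_in_open)
      then show ?thesis
        by eventually_elim (use assms m in \<open>auto simp: chr good_def\<close>)
    qed
    have "pd (\<lambda>y. christoffel (sss_metric b) y k i j) m x = deriv (\<lambda>s. Gam b s (x 2) k i j) (x 1)"
      unfolding pd_def m by (intro deriv_cong_ev[OF ev]) auto
    also have "\<dots> = dGr b (x 1) (x 2) k i j"
      using assms(1) by (intro DERIV_imp_deriv Gam_dr) (use assms in \<open>auto simp: good_def\<close>)
    finally show ?thesis using m by (simp add: dG_def)
  next
    assume m: "m = 2"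
    have ev: "eventually (\<lambda>s. christoffel (sss_metric b) (x(2:=s)) k i j = Gam b (x 1) s k i j) (nhds (x 2))"
    proof -
      have "eventually (\<lambda>s. s \<in> {0<..<pi}) (nhds (x 2))"
        using assms(1) unfolding good_def by (intro eventually_nhds_in_open) auto
      then show ?thesis
        by eventually_elim (use assms m in \<open>auto simp: chr good_def\<close>)
    qed
    have "pd (\<lambda>y. christoffel (sss_metric b) y k i j) m x = deriv (\<lambda>s. Gam b (x 1) s k i j) (x 2)"
      unfolding pd_def m by (intro deriv_cong_ev[OF ev]) auto
    also have "\<dots> = dGt b (x 1) (x 2) k i j"
      using good_facts[OF assms(1)] by (intro DERIV_imp_deriv Gam_dt) (use assms in auto)
    finally show ?thesis using m by (simp add: dG_def)
  next
    assume m: "m = 0"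
    have "(\<lambda>s. christoffel (sss_metric b) (x(m:=s)) k i j) = (\<lambda>s. Gam b (x 1) (x 2) k i j)"
      using assms m by (auto simp: chr good_def)
    then show ?thesis unfolding pd_def using m by (simp add: dG_def)
  next
    assume m: "m = 3"
    have "(\<lambda>s. christoffel (sss_metric b) (x(m:=s)) k i j) = (\<lambda>s. Gam b (x 1) (x 2) k i j)"
      using assms m by (auto simp: chr good_def)
    then show ?thesis unfolding pd_def using m by (simp add: dG_def)
  qed
qed

end


definition Ric :: "(real\<Rightarrow>real) \<Rightarrow> real \<Rightarrow> real \<Rightarrow> nat \<Rightarrow> nat \<Rightarrow> real" where
 "Ric b r t i j = (let B = (b r)^2; Bp = 2 * b r * deriv b r;
     Bpp = 2 * (deriv b r)^2 + 2 * b r * deriv (deriv b) r in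
   if i = j then (if i = 0 then B * (r * Bpp + 2 * Bp) / (2 * r)
     else if i = 1 then - ((r * Bpp + 2 * Bp) / (2 * r * B))
     else if i = 2 then 1 - B - r * Bp
     else if i = 3 then (sin t)^2 * (1 - B - r * Bp) else 0) else 0)"

context sss begin

lemma ricci_eq: assumes "good x" "i < 4" "j < 4"
  shows "ricci (sss_metric b) x i j = Ric b (x 1) (x 2) i j"
proof -
  note f = good_facts[OF assms(1)]
  have sc: "(sin (x 2))^2 + (cos (x 2))^2 = 1" by simp
  show ?thesis
    using assms(2,3) f unfolding ricci_def less4
    apply (elim disjE)
    apply (simp_all add: sum4 pd_chr[OF assms(1)] chr[OF assms(1)])
    apply (simp_all add: Gam_def dG_def dGr_def dGt_def Ric_def Let_def)
    apply (simp_all add: field_simps power2_eq_square power3_eq_cube)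
    done
qed

end


definition e1 :: "real \<Rightarrow> real \<Rightarrow> (real\<Rightarrow>real) \<Rightarrow> real \<Rightarrow> real" where
 "e1 \<kappa>1 \<kappa>2 b r = (r * (2 * b r * deriv b r) + (b r)^2 - 1) / r^2 - \<kappa>1 - \<kappa>2 * r^2"

definition e2 :: "real \<Rightarrow> real \<Rightarrow> (real\<Rightarrow>real) \<Rightarrow> real \<Rightarrow> real" where
 "e2 \<kappa>1 \<kappa>2 b r = (r * (2 * (deriv b r)^2 + 2 * b r * deriv (deriv b) r) + 2 * (2 * b r * deriv b r)) / (2 * r)
    - \<kappa>1 - 2 * \<kappa>2 * r^2"

definition Ediff :: "real \<Rightarrow> real \<Rightarrow> (real\<Rightarrow>real) \<Rightarrow> real \<Rightarrow> real \<Rightarrow> nat \<Rightarrow> nat \<Rightarrow> real" where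
 "Ediff \<kappa>1 \<kappa>2 b r t k l = (if k = l then (if k = 0 then - ((b r)^2 * e1 \<kappa>1 \<kappa>2 b r)
    else if k = 1 then e1 \<kappa>1 \<kappa>2 b r / (b r)^2 else if k = 2 then r^2 * e2 \<kappa>1 \<kappa>2 b r
    else if k = 3 then r^2 * (sin t)^2 * e2 \<kappa>1 \<kappa>2 b r else 0) else 0)"

context sss begin

lemma scal_eq: assumes "good x"
  shows "scalar_curv (sss_metric b) x = (let B = (b (x 1))^2; Bp = 2 * b (x 1) * deriv b (x 1);
     Bpp = 2 * (deriv b (x 1))^2 + 2 * b (x 1) * deriv (deriv b) (x 1); r = x 1 in
     - ((r * Bpp + 2 * Bp) / r) + 2 * (1 - B - r * Bp) / r^2)"
proof -
  note f = good_facts[OF assms(1)]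
  have g: "ginv (sss_metric b) x = hinv b (x 1) (x 2)"
    by (rule ginv_eq) (use f in auto)
  show ?thesis unfolding scalar_curv_def g
    using f by (simp add: sum4 ricci_eq[OF assms] hinv_def Ric_def Let_def field_simps power2_eq_square)
qed

lemma einst: assumes "good x" "k < 4" "l < 4"
  shows "ricci (sss_metric b) x k l - (1/2) * scalar_curv (sss_metric b) x * sss_metric b x k l
     - K_tensor \<kappa>1 \<kappa>2 b x k l = Ediff \<kappa>1 \<kappa>2 b (x 1) (x 2) k l"
proof -
  note f = good_facts[OF assms(1)]
  show ?thesis
    using assms(2,3) f unfolding less4
    apply (elim disjE)
    apply (simp_all add: ricci_eq[OF assms(1)] scal_eq[OF assms(1)] K_tensor_def sss_gd)
    apply (simp_all add: Ric_def Let_def gd_def Ediff_def e1_def e2_def u_cov_def chi_cov_def)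
    apply (simp_all add: field_simps power2_eq_square)
    done
qed

lemma equiv_e: "(\<forall>x. x 1 \<in> I \<and> 0 < x 2 \<and> x 2 < pi \<longrightarrow>
            (\<forall>k<4. \<forall>l<4. ricci (sss_metric b) x k l
                 - (1/2) * scalar_curv (sss_metric b) x * sss_metric b x k l
               = K_tensor \<kappa>1 \<kappa>2 b x k l))
   \<longleftrightarrow> (\<forall>r\<in>I. e1 \<kappa>1 \<kappa>2 b r = 0 \<and> e2 \<kappa>1 \<kappa>2 b r = 0)"
proof
  assume H: "\<forall>x. x 1 \<in> I \<and> 0 < x 2 \<and> x 2 < pi \<longrightarrow>
            (\<forall>k<4. \<forall>l<4. ricci (sss_metric b) x k l
                 - (1/2) * scalar_curv (sss_metric b) x * sss_metric b x k l
               = K_tensor \<kappa>1 \<kappa>2 b x k l)"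
  show "\<forall>r\<in>I. e1 \<kappa>1 \<kappa>2 b r = 0 \<and> e2 \<kappa>1 \<kappa>2 b r = 0"
  proof
    fix r assume r: "r \<in> I"
    define x :: point where "x = (\<lambda>n. if n = 1 then r else pi / 2)"
    have gx: "good x" using r unfolding good_def x_def by auto
    have x1: "x 1 = r" and x2: "x 2 = pi/2" unfolding x_def by auto
    have E: "Ediff \<kappa>1 \<kappa>2 b r (pi/2) k l = 0" if "k < 4" "l < 4" for k l
    proof -
      have h: "ricci (sss_metric b) x k l
                 - (1/2) * scalar_curv (sss_metric b) x * sss_metric b x k l
               = K_tensor \<kappa>1 \<kappa>2 b x k l" using H gx that unfolding good_def by blast
      show ?thesis using einst[OF gx that, of \<kappa>1 \<kappa>2] h unfolding x1 x2 by simp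
    qed
    have "b r > 0" "r > 0" using r bpos Ipos by auto
    then show "e1 \<kappa>1 \<kappa>2 b r = 0 \<and> e2 \<kappa>1 \<kappa>2 b r = 0"
      using E[of 1 1] E[of 2 2] by (simp add: Ediff_def)
  qed
next
  assume H: "\<forall>r\<in>I. e1 \<kappa>1 \<kappa>2 b r = 0 \<and> e2 \<kappa>1 \<kappa>2 b r = 0"
  show "\<forall>x. x 1 \<in> I \<and> 0 < x 2 \<and> x 2 < pi \<longrightarrow>
            (\<forall>k<4. \<forall>l<4. ricci (sss_metric b) x k l
                 - (1/2) * scalar_curv (sss_metric b) x * sss_metric b x k l
               = K_tensor \<kappa>1 \<kappa>2 b x k l)"
  proof (intro allI impI)
    fix x :: point and k l :: nat assume gx0: "x 1 \<in> I \<and> 0 < x 2 \<and> x 2 < pi" and kl: "k < 4" "l < 4"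
    have gx: "good x" using gx0 unfolding good_def by auto
    have "Ediff \<kappa>1 \<kappa>2 b (x 1) (x 2) k l = 0" using H gx0 by (simp add: Ediff_def)
    then show "ricci (sss_metric b) x k l
                 - (1/2) * scalar_curv (sss_metric b) x * sss_metric b x k l
               = K_tensor \<kappa>1 \<kappa>2 b x k l"
      using einst[OF gx kl, of \<kappa>1 \<kappa>2] by simp
  qed
qed

end


context sss begin

lemma e_forward:
  assumes "is_interval I" and H: "\<forall>r\<in>I. e1 \<kappa>1 \<kappa>2 b r = 0"
  shows "\<exists>M. \<forall>r\<in>I. (b r)\<^sup>2 = 1 - 2 * M / r - (- \<kappa>1) / 3 * r\<^sup>2 - (- \<kappa>2) / 5 * r ^ 4"
proof -
  define F where "F s = s * (b s)^2 - s - \<kappa>1 * s^3 / 3 - \<kappa>2 * s^5 / 5" for s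
  have dF: "(F has_field_derivative 0) (at s within I)" if s: "s \<in> I" for s
  proof -
    have bs: "b s > 0" "s > 0" using s bpos Ipos by auto
    have d: "(b has_real_derivative deriv b s) (at s)" using s db by auto
    have "(F has_field_derivative s^2 * e1 \<kappa>1 \<kappa>2 b s) (at s)"
      unfolding F_def e1_def using bs d
      by (auto intro!: derivative_eq_intros simp: field_simps power2_eq_square eval_nat_numeral)
    then have "(F has_field_derivative 0) (at s)" using H s by simp
    then show ?thesis by (rule has_field_derivative_at_within)
  qed
  obtain c where c: "\<forall>s\<in>I. F s = c"
    using has_field_derivative_zero_constant[OF is_interval_convex[OF assms(1)] dF] by blast
  show ?thesis
  proof (intro exI ballI)
    fix r assume r: "r \<in> I"
    have "r > 0" using r Ipos by auto
    then show "(b r)\<^sup>2 = 1 - 2 * (- c / 2) / r - (- \<kappa>1) / 3 * r\<^sup>2 - (- \<kappa>2) / 5 * r ^ 4"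
      using c r unfolding F_def by (auto simp: field_simps power2_eq_square power3_eq_cube eval_nat_numeral)
  qed
qed

lemma e_backward:
  assumes M: "\<forall>r\<in>I. (b r)\<^sup>2 = 1 - 2 * M / r - (- \<kappa>1) / 3 * r\<^sup>2 - (- \<kappa>2) / 5 * r ^ 4"
    and r: "r \<in> I"
  shows "e1 \<kappa>1 \<kappa>2 b r = 0 \<and> e2 \<kappa>1 \<kappa>2 b r = 0"
proof -
  define P where "P s = 1 - 2 * M / s - (- \<kappa>1) / 3 * s\<^sup>2 - (- \<kappa>2) / 5 * s ^ 4" for s
  define P1 where "P1 s = 2 * M / s^2 + 2 * \<kappa>1 / 3 * s + 4 * \<kappa>2 / 5 * s^3" for s
  define P2 where "P2 s = - 4 * M / s^3 + 2 * \<kappa>1 / 3 + 12 * \<kappa>2 / 5 * s^2" for s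
  have dP: "(P has_real_derivative P1 s) (at s)" if "s > 0" for s
    unfolding P_def P1_def using that
    by (auto intro!: derivative_eq_intros simp: field_simps power2_eq_square eval_nat_numeral)
  have dP1: "(P1 has_real_derivative P2 s) (at s)" if "s > 0" for s
    unfolding P2_def P1_def using that
    by (auto intro!: derivative_eq_intros simp: field_simps power2_eq_square eval_nat_numeral)
  have I1: "2 * b s * deriv b s = P1 s" if s: "s \<in> I" for s
  proof -
    have sp: "s > 0" using s Ipos by auto
    have d: "(b has_real_derivative deriv b s) (at s)" using s db by auto
    have "((\<lambda>s. (b s)^2) has_real_derivative 2 * b s * deriv b s) (at s)"
      using d by (auto intro!: derivative_eq_intros)
    moreover have "((\<lambda>s. (b s)^2) has_real_derivative P1 s) (at s)"
      by (rule has_field_derivative_transform_within_open[OF dP[OF sp] openI s])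
        (use M in \<open>auto simp: P_def\<close>)
    ultimately show ?thesis by (rule DERIV_unique)
  qed
  have rp: "r > 0" using r Ipos by auto
  have I2: "2 * (deriv b r)^2 + 2 * b r * deriv (deriv b) r = P2 r"
  proof -
    have d: "(b has_real_derivative deriv b r) (at r)" "(deriv b has_real_derivative deriv (deriv b) r) (at r)"
      using r db ddb by auto
    have "((\<lambda>s. 2 * b s * deriv b s) has_real_derivative 2 * (deriv b r)^2 + 2 * b r * deriv (deriv b) r) (at r)"
      using d by (auto intro!: derivative_eq_intros simp: power2_eq_square)
    moreover have "((\<lambda>s. 2 * b s * deriv b s) has_real_derivative P2 r) (at r)"
      by (rule has_field_derivative_transform_within_open[OF dP1[OF rp] openI r])
        (use I1 in auto)
    ultimately show ?thesis by (rule DERIV_unique)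
  qed
  have I0: "(b r)^2 = P r" using M r unfolding P_def by auto
  show ?thesis
    unfolding e1_def e2_def I1[OF r] I2 I0 using rp
    by (simp add: P_def P1_def P2_def field_simps power2_eq_square eval_nat_numeral)
qed

end

theorem proposition9:
  fixes b :: "real \<Rightarrow> real" and I :: "real set" and \<kappa>1 \<kappa>2 Lam lam :: real
  assumes "open I" and "is_interval I" and "I \<noteq> {}" and "I \<subseteq> {0<..}"
    and "smooth_on I b" and "\<forall>r\<in>I. b r > 0"
    and "Lam = - \<kappa>1" and "lam = - \<kappa>2"
  shows "(\<forall>x. x 1 \<in> I \<and> 0 < x 2 \<and> x 2 < pi \<longrightarrow>
            (\<forall>k<4. \<forall>l<4. ricci (sss_metric b) x k l
                 - (1/2) * scalar_curv (sss_metric b) x * sss_metric b x k l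
               = K_tensor \<kappa>1 \<kappa>2 b x k l))
     \<longleftrightarrow> (\<exists>M. \<forall>r\<in>I. (b r)\<^sup>2 = 1 - 2 * M / r - Lam / 3 * r\<^sup>2 - lam / 5 * r ^ 4)"
proof -
  have db: "\<forall>r\<in>I. (b has_real_derivative deriv b r) (at r)"
  proof
    fix r assume "r \<in> I"
    then have "((deriv ^^ 0) b) differentiable (at r)" using assms(5) unfolding smooth_on_def by blast
    then show "(b has_real_derivative deriv b r) (at r)"
      by (simp add: DERIV_deriv_iff_real_differentiable)
  qed
  have ddb: "\<forall>r\<in>I. (deriv b has_real_derivative deriv (deriv b) r) (at r)"
  proof
    fix r assume "r \<in> I"
    then have "((deriv ^^ 1) b) differentiable (at r)" using assms(5) unfolding smooth_on_def by blast
    then show "(deriv b has_real_derivative deriv (deriv b) r) (at r)"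
      by (simp add: DERIV_deriv_iff_real_differentiable)
  qed
  interpret sss b I
    by unfold_locales (use assms db ddb in auto)
  show ?thesis
    unfolding equiv_e assms(7,8)
    using e_forward[OF assms(2)] e_backward by blast
qed


end
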